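(* Let $\mathcal{C}$ be a strict monoidal category with a pre-braiding $\sigma$, and let $\mathcal{C}_\sigma$ be the subcategory defined below. Then $\mathcal{C}_\sigma$ is a braided monoidal category with braiding $\sigma$.
   Context: A pre-braiding is a family of morphisms $\sigma_{A,B}\colon A\otimes B\to B\otimes A$, $A,B\in\mathrm{Ob}\,\mathcal{C}$, satisfying the Yang–Baxter equation $(\mathrm{id}_C\otimes\sigma_{A,B})(\sigma_{A,C}\otimes\mathrm{id}_B)(\mathrm{id}_A\otimes\sigma_{B,C})=(\sigma_{B,C}\otimes\mathrm{id}_A)(\mathrm{id}_B\otimes\sigma_{A,C})(\sigma_{A,B}\otimes\mathrm{id}_C)$ and the hexagon identities $\sigma_{A\otimes B,C}=(\sigma_{A,C}\otimes\mathrm{id}_B)(\mathrm{id}_A\otimes\sigma_{B,C})$, $\sigma_{C,A\otimes B}=(\mathrm{id}_A\otimes\sigma_{C,B})(\sigma_{C,A}\otimes\mathrm{id}_B)$, but not necessarily natural. A braiding is a pre-braiding that is natural: $(g\otimes f)\circ\sigma_{A,B}=\sigma_{A',B'}\circ(f\otimes g)$ for all morphisms $f\colon A\to A'$, $g\colon B\to B'$. $\mathcal{C}_\sigma$ has the same objects as $\mathcal{C}$, and $f\in\mathrm{Hom}_\mathcal{C}(A,B)$ is a morphism of $\mathcal{C}_\sigma$ iff $\sigma_{B,C}\circ(f\otimes\mathrm{id}_C)=(\mathrm{id}_C\otimes f)\circ\sigma_{A,C}$ and $(f\otimes\mathrm{id}_C)\circ\sigma_{C,A}=\sigma_{C,B}\circ(\mathrm{id}_C\otimes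 f)$ for all $C\in\mathrm{Ob}\,\mathcal{C}$. *)

theory Defs
  imports Main
begin

text \<open>Categories are given by a set of objects Obj, a set of arrows Arr,
  domain and codomain maps, a composition cmp g f (meaning g after f,
  required only for composable arrows) and identities ident.\<close>

locale category =
  fixes Obj :: "'o set" and Arr :: "'m set"
    and dm :: "'m \<Rightarrow> 'o" and cd :: "'m \<Rightarrow> 'o"
    and cmp :: "'m \<Rightarrow> 'm \<Rightarrow> 'm" and ident :: "'o \<Rightarrow> 'm"
  assumes dom_in: "f \<in> Arr \<Longrightarrow> dm f \<in> Obj"
    and cod_in: "f \<in> Arr \<Longrightarrow> cd f \<in> Obj"
    and ident_arr: "A \<in> Obj \<Longrightarrow> ident A \<in> Arr"
    and ident_dom: "A \<in> Obj \<Longrightarrow> dm (ident A) = A"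
    and ident_cod: "A \<in> Obj \<Longrightarrow> cd (ident A) = A"
    and comp_arr: "\<lbrakk>f \<in> Arr; g \<in> Arr; cd f = dm g\<rbrakk> \<Longrightarrow> cmp g f \<in> Arr"
    and comp_dom: "\<lbrakk>f \<in> Arr; g \<in> Arr; cd f = dm g\<rbrakk> \<Longrightarrow> dm (cmp g f) = dm f"
    and comp_cod: "\<lbrakk>f \<in> Arr; g \<in> Arr; cd f = dm g\<rbrakk> \<Longrightarrow> cd (cmp g f) = cd g"
    and comp_ident_left: "f \<in> Arr \<Longrightarrow> cmp (ident (cd f)) f = f"
    and comp_ident_right: "f \<in> Arr \<Longrightarrow> cmp f (ident (dm f)) = f"
    and comp_assoc: "\<lbrakk>f \<in> Arr; g \<in> Arr; h \<in> Arr; cd f = dm g; cd g = dm h\<rbrakk>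
                      \<Longrightarrow> cmp h (cmp g f) = cmp (cmp h g) f"

locale strict_monoidal_category = category Obj Arr dm cd cmp ident
  for Obj :: "'o set" and Arr :: "'m set"
    and dm :: "'m \<Rightarrow> 'o" and cd :: "'m \<Rightarrow> 'o"
    and cmp :: "'m \<Rightarrow> 'm \<Rightarrow> 'm" and ident :: "'o \<Rightarrow> 'm" +
  fixes tens :: "'o \<Rightarrow> 'o \<Rightarrow> 'o" and tensm :: "'m \<Rightarrow> 'm \<Rightarrow> 'm" and unit :: 'o
  assumes unit_in: "unit \<in> Obj"
    and tens_obj: "\<lbrakk>A \<in> Obj; B \<in> Obj\<rbrakk> \<Longrightarrow> tens A B \<in> Obj"
    and tensm_arr: "\<lbrakk>f \<in> Arr; g \<in> Arr\<rbrakk> \<Longrightarrow> tensm f g \<in> Arr"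
    and tensm_dom: "\<lbrakk>f \<in> Arr; g \<in> Arr\<rbrakk> \<Longrightarrow> dm (tensm f g) = tens (dm f) (dm g)"
    and tensm_cod: "\<lbrakk>f \<in> Arr; g \<in> Arr\<rbrakk> \<Longrightarrow> cd (tensm f g) = tens (cd f) (cd g)"
    and tensm_ident: "\<lbrakk>A \<in> Obj; B \<in> Obj\<rbrakk> \<Longrightarrow> tensm (ident A) (ident B) = ident (tens A B)"
    and tensm_comp: "\<lbrakk>f \<in> Arr; g \<in> Arr; f' \<in> Arr; g' \<in> Arr; cd f = dm g; cd f' = dm g'\<rbrakk>
                      \<Longrightarrow> tensm (cmp g f) (cmp g' f') = cmp (tensm g g') (tensm f f')"
    and tens_assoc: "\<lbrakk>A \<in> Obj; B \<in> Obj; C \<in> Obj\<rbrakk> \<Longrightarrow> tens (tens A B) C = tens A (tens B C)"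
    and tens_unit_left: "A \<in> Obj \<Longrightarrow> tens unit A = A"
    and tens_unit_right: "A \<in> Obj \<Longrightarrow> tens A unit = A"
    and tensm_assoc: "\<lbrakk>f \<in> Arr; g \<in> Arr; h \<in> Arr\<rbrakk> \<Longrightarrow> tensm (tensm f g) h = tensm f (tensm g h)"
    and tensm_unit_left: "f \<in> Arr \<Longrightarrow> tensm (ident unit) f = f"
    and tensm_unit_right: "f \<in> Arr \<Longrightarrow> tensm f (ident unit) = f"

text \<open>Pre-braiding: Yang-Baxter equation and the two hexagon identities (not necessarily natural).\<close>

locale pre_braiding = strict_monoidal_category Obj Arr dm cd cmp ident tens tensm unit
  for Obj :: "'o set" and Arr :: "'m set"
    and dm :: "'m \<Rightarrow> 'o" and cd :: "'m \<Rightarrow> 'o"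
    and cmp :: "'m \<Rightarrow> 'm \<Rightarrow> 'm" and ident :: "'o \<Rightarrow> 'm"
    and tens :: "'o \<Rightarrow> 'o \<Rightarrow> 'o" and tensm :: "'m \<Rightarrow> 'm \<Rightarrow> 'm" and unit :: 'o +
  fixes \<sigma> :: "'o \<Rightarrow> 'o \<Rightarrow> 'm"
  assumes sigma_arr: "\<lbrakk>A \<in> Obj; B \<in> Obj\<rbrakk> \<Longrightarrow> \<sigma> A B \<in> Arr"
    and sigma_dom: "\<lbrakk>A \<in> Obj; B \<in> Obj\<rbrakk> \<Longrightarrow> dm (\<sigma> A B) = tens A B"
    and sigma_cod: "\<lbrakk>A \<in> Obj; B \<in> Obj\<rbrakk> \<Longrightarrow> cd (\<sigma> A B) = tens B A"
    and yang_baxter: "\<lbrakk>A \<in> Obj; B \<in> Obj; C \<in> Obj\<rbrakk> \<Longrightarrow>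
        cmp (tensm (ident C) (\<sigma> A B)) (cmp (tensm (\<sigma> A C) (ident B)) (tensm (ident A) (\<sigma> B C)))
      = cmp (tensm (\<sigma> B C) (ident A)) (cmp (tensm (ident B) (\<sigma> A C)) (tensm (\<sigma> A B) (ident C)))"
    and hexagon1: "\<lbrakk>A \<in> Obj; B \<in> Obj; C \<in> Obj\<rbrakk> \<Longrightarrow>
        \<sigma> (tens A B) C = cmp (tensm (\<sigma> A C) (ident B)) (tensm (ident A) (\<sigma> B C))"
    and hexagon2: "\<lbrakk>A \<in> Obj; B \<in> Obj; C \<in> Obj\<rbrakk> \<Longrightarrow>
        \<sigma> C (tens A B) = cmp (tensm (ident A) (\<sigma> C B)) (tensm (\<sigma> C A) (ident B))"

locale braided_monoidal_category = pre_braiding Obj Arr dm cd cmp ident tens tensm unit \<sigma>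
  for Obj :: "'o set" and Arr :: "'m set"
    and dm :: "'m \<Rightarrow> 'o" and cd :: "'m \<Rightarrow> 'o"
    and cmp :: "'m \<Rightarrow> 'm \<Rightarrow> 'm" and ident :: "'o \<Rightarrow> 'm"
    and tens :: "'o \<Rightarrow> 'o \<Rightarrow> 'o" and tensm :: "'m \<Rightarrow> 'm \<Rightarrow> 'm" and unit :: 'o
    and \<sigma> :: "'o \<Rightarrow> 'o \<Rightarrow> 'm" +
  assumes natural: "\<lbrakk>f \<in> Arr; g \<in> Arr\<rbrakk> \<Longrightarrow>
        cmp (tensm g f) (\<sigma> (dm f) (dm g)) = cmp (\<sigma> (cd f) (cd g)) (tensm f g)"

definition C_sigma_Arr ::
  "'o set \<Rightarrow> 'm set \<Rightarrow> ('m \<Rightarrow> 'o) \<Rightarrow> ('m \<Rightarrow> 'o) \<Rightarrow> ('m \<Rightarrow> 'm \<Rightarrow> 'm) \<Rightarrow> ('o \<Rightarrow> 'm)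
    \<Rightarrow> ('m \<Rightarrow> 'm \<Rightarrow> 'm) \<Rightarrow> ('o \<Rightarrow> 'o \<Rightarrow> 'm) \<Rightarrow> 'm set" where
  "C_sigma_Arr Obj Arr dm cd cmp ident tensm \<sigma> =
     {f \<in> Arr. \<forall>C \<in> Obj.
        cmp (\<sigma> (cd f) C) (tensm f (ident C)) = cmp (tensm (ident C) f) (\<sigma> (dm f) C)
      \<and> cmp (tensm f (ident C)) (\<sigma> C (dm f)) = cmp (\<sigma> C (cd f)) (tensm (ident C) f)}"

end

theory Submission
  imports Defs
begin

context pre_braiding
begin

lemmas ty = sigma_arr sigma_dom sigma_cod tensm_arr tensm_dom tensm_cod ident_arr ident_dom ident_cod
  comp_arr comp_dom comp_cod tens_obj dom_in cod_in

lemma assoc_r: "\<lbrakk>f \<in> Arr; g \<in> Arr; h \<in> Arr; cd f = dm g; cd g = dm h\<rbrakk>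
   \<Longrightarrow> cmp (cmp h g) f = cmp h (cmp g f)"
  using comp_assoc by simp

lemma idid: "C \<in> Obj \<Longrightarrow> cmp (ident C) (ident C) = ident C"
  using comp_ident_left[of "ident C"] by (simp add: ident_arr ident_cod)

lemma lid: "\<lbrakk>f \<in> Arr; cd f = B\<rbrakk> \<Longrightarrow> cmp (ident B) f = f"
  using comp_ident_left by blast
lemma rid: "\<lbrakk>f \<in> Arr; dm f = B\<rbrakk> \<Longrightarrow> cmp f (ident B) = f"
  using comp_ident_right by blast

lemma fun1: "\<lbrakk>f \<in> Arr; g \<in> Arr; cd f = dm g; C \<in> Obj\<rbrakk> \<Longrightarrow>
  tensm (cmp g f) (ident C) = cmp (tensm g (ident C)) (tensm f (ident C))"
  using tensm_comp[of f g "ident C" "ident C"] by (simp add: ty idid)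
lemma fun2: "\<lbrakk>f \<in> Arr; g \<in> Arr; cd f = dm g; C \<in> Obj\<rbrakk> \<Longrightarrow>
  tensm (ident C) (cmp g f) = cmp (tensm (ident C) g) (tensm (ident C) f)"
  using tensm_comp[of "ident C" "ident C" f g] by (simp add: ty idid)

definition S where "S = C_sigma_Arr Obj Arr dm cd cmp ident tensm \<sigma>"

lemma S_iff: "f \<in> S \<longleftrightarrow> f \<in> Arr \<and> (\<forall>C \<in> Obj.
        cmp (\<sigma> (cd f) C) (tensm f (ident C)) = cmp (tensm (ident C) f) (\<sigma> (dm f) C)
      \<and> cmp (tensm f (ident C)) (\<sigma> C (dm f)) = cmp (\<sigma> C (cd f)) (tensm (ident C) f))"
  unfolding S_def C_sigma_Arr_def by blast

lemma ident_S: "A \<in> Obj \<Longrightarrow> ident A \<in> S"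
  unfolding S_iff by (simp add: ty tensm_ident lid rid)


lemma comp_S:
  assumes f: "f \<in> S" and g: "g \<in> S" and fg: "cd f = dm g"
  shows "cmp g f \<in> S"
proof -
  have fA: "f \<in> Arr" and gA: "g \<in> Arr" using f g S_iff by auto
  have f1: "\<And>C. C \<in> Obj \<Longrightarrow> cmp (\<sigma> (cd f) C) (tensm f (ident C)) = cmp (tensm (ident C) f) (\<sigma> (dm f) C)"
   and f2: "\<And>C. C \<in> Obj \<Longrightarrow> cmp (tensm f (ident C)) (\<sigma> C (dm f)) = cmp (\<sigma> C (cd f)) (tensm (ident C) f)"
    using f S_iff by auto
  have g1: "\<And>C. C \<in> Obj \<Longrightarrow> cmp (\<sigma> (cd g) C) (tensm g (ident C)) = cmp (tensm (ident C) g) (\<sigma> (dm g) C)"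
   and g2: "\<And>C. C \<in> Obj \<Longrightarrow> cmp (tensm g (ident C)) (\<sigma> C (dm g)) = cmp (\<sigma> C (cd g)) (tensm (ident C) g)"
    using g S_iff by auto
  have A: "dm f \<in> Obj" "cd f \<in> Obj" "dm g \<in> Obj" "cd g \<in> Obj" using fA gA ty by auto
  show ?thesis unfolding S_iff
  proof (intro conjI ballI)
    show "cmp g f \<in> Arr" using fA gA fg ty by auto
    fix C assume C: "C \<in> Obj"
    have "cmp (\<sigma> (cd (cmp g f)) C) (tensm (cmp g f) (ident C))
        = cmp (\<sigma> (cd g) C) (cmp (tensm g (ident C)) (tensm f (ident C)))"
      using fA gA fg C by (simp add: ty fun1)
    also have "\<dots> = cmp (cmp (\<sigma> (cd g) C) (tensm g (ident C))) (tensm f (ident C))"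
      using fA gA fg C A by (simp add: ty assoc_r)
    also have "\<dots> = cmp (cmp (tensm (ident C) g) (\<sigma> (cd f) C)) (tensm f (ident C))"
      using g1[OF C] fg by simp
    also have "\<dots> = cmp (tensm (ident C) g) (cmp (\<sigma> (cd f) C) (tensm f (ident C)))"
      using fA gA fg C A by (simp add: ty assoc_r)
    also have "\<dots> = cmp (tensm (ident C) g) (cmp (tensm (ident C) f) (\<sigma> (dm f) C))"
      using f1[OF C] by simp
    also have "\<dots> = cmp (tensm (ident C) (cmp g f)) (\<sigma> (dm (cmp g f)) C)"
      using fA gA fg C A by (simp add: ty assoc_r fun2)
    finally show "cmp (\<sigma> (cd (cmp g f)) C) (tensm (cmp g f) (ident C)) = cmp (tensm (ident C) (cmp g f)) (\<sigma> (dm (cmp g f)) C)" .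
    have "cmp (tensm (cmp g f) (ident C)) (\<sigma> C (dm (cmp g f)))
        = cmp (tensm g (ident C)) (cmp (tensm f (ident C)) (\<sigma> C (dm f)))"
      using fA gA fg C A by (simp add: ty fun1 assoc_r)
    also have "\<dots> = cmp (tensm g (ident C)) (cmp (\<sigma> C (cd f)) (tensm (ident C) f))"
      using f2[OF C] by simp
    also have "\<dots> = cmp (cmp (tensm g (ident C)) (\<sigma> C (dm g))) (tensm (ident C) f)"
      using fA gA fg C A by (simp add: ty assoc_r)
    also have "\<dots> = cmp (cmp (\<sigma> C (cd g)) (tensm (ident C) g)) (tensm (ident C) f)"
      using g2[OF C] by simp
    also have "\<dots> = cmp (\<sigma> C (cd (cmp g f))) (tensm (ident C) (cmp g f))"
      using fA gA fg C A by (simp add: ty assoc_r fun2)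
    finally show "cmp (tensm (cmp g f) (ident C)) (\<sigma> C (dm (cmp g f))) = cmp (\<sigma> C (cd (cmp g f))) (tensm (ident C) (cmp g f))" .
  qed
qed

lemma natural_S:
  assumes f: "f \<in> S" and g: "g \<in> S"
  shows "cmp (tensm g f) (\<sigma> (dm f) (dm g)) = cmp (\<sigma> (cd f) (cd g)) (tensm f g)"
proof -
  have fA: "f \<in> Arr" and gA: "g \<in> Arr" using f g S_iff by auto
  have f1: "\<And>C. C \<in> Obj \<Longrightarrow> cmp (\<sigma> (cd f) C) (tensm f (ident C)) = cmp (tensm (ident C) f) (\<sigma> (dm f) C)"
    using f S_iff by auto
  have g2: "\<And>C. C \<in> Obj \<Longrightarrow> cmp (tensm g (ident C)) (\<sigma> C (dm g)) = cmp (\<sigma> C (cd g)) (tensm (ident C) g)"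
    using g S_iff by auto
  have A: "dm f \<in> Obj" "cd f \<in> Obj" "dm g \<in> Obj" "cd g \<in> Obj" using fA gA ty by auto
  have "tensm g f = tensm (cmp g (ident (dm g))) (cmp (ident (cd f)) f)"
    using fA gA by (simp add: lid rid)
  also have "\<dots> = cmp (tensm g (ident (cd f))) (tensm (ident (dm g)) f)"
    using fA gA A by (simp add: ty tensm_comp)
  finally have e1: "tensm g f = cmp (tensm g (ident (cd f))) (tensm (ident (dm g)) f)" .
  have "tensm f g = tensm (cmp (ident (cd f)) f) (cmp g (ident (dm g)))"
    using fA gA by (simp add: lid rid)
  also have "\<dots> = cmp (tensm (ident (cd f)) g) (tensm f (ident (dm g)))"
    using fA gA A by (simp add: ty tensm_comp)
  finally have e2: "tensm f g = cmp (tensm (ident (cd f)) g) (tensm f (ident (dm g)))" .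
  have "cmp (tensm g f) (\<sigma> (dm f) (dm g))
      = cmp (tensm g (ident (cd f))) (cmp (tensm (ident (dm g)) f) (\<sigma> (dm f) (dm g)))"
    unfolding e1 using fA gA A by (simp add: ty assoc_r)
  also have "\<dots> = cmp (tensm g (ident (cd f))) (cmp (\<sigma> (cd f) (dm g)) (tensm f (ident (dm g))))"
    using f1[OF A(3)] by simp
  also have "\<dots> = cmp (cmp (tensm g (ident (cd f))) (\<sigma> (cd f) (dm g))) (tensm f (ident (dm g)))"
    using fA gA A by (simp add: ty assoc_r)
  also have "\<dots> = cmp (cmp (\<sigma> (cd f) (cd g)) (tensm (ident (cd f)) g)) (tensm f (ident (dm g)))"
    using g2[OF A(2)] by simp
  also have "\<dots> = cmp (\<sigma> (cd f) (cd g)) (tensm f g)"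
    unfolding e2 using fA gA A by (simp add: ty assoc_r)
  finally show ?thesis .
qed


lemma sigma_S:
  assumes A: "A \<in> Obj" and B: "B \<in> Obj"
  shows "\<sigma> A B \<in> S"
  unfolding S_iff
proof (intro conjI ballI)
  show "\<sigma> A B \<in> Arr" using A B ty by auto
  fix C assume C: "C \<in> Obj"
  show "cmp (\<sigma> (cd (\<sigma> A B)) C) (tensm (\<sigma> A B) (ident C)) = cmp (tensm (ident C) (\<sigma> A B)) (\<sigma> (dm (\<sigma> A B)) C)"
    using A B C yang_baxter[OF A B C] by (simp add: ty hexagon1 assoc_r tens_assoc)
  show "cmp (tensm (\<sigma> A B) (ident C)) (\<sigma> C (dm (\<sigma> A B))) = cmp (\<sigma> C (cd (\<sigma> A B))) (tensm (ident C) (\<sigma> A B))"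
    using A B C yang_baxter[OF C A B] by (simp add: ty hexagon2 assoc_r tens_assoc)
qed

lemma tensm_S:
  assumes f: "f \<in> S" and g: "g \<in> S"
  shows "tensm f g \<in> S"
proof -
  have fA: "f \<in> Arr" and gA: "g \<in> Arr" using f g S_iff by auto
  have f1: "\<And>C. C \<in> Obj \<Longrightarrow> cmp (\<sigma> (cd f) C) (tensm f (ident C)) = cmp (tensm (ident C) f) (\<sigma> (dm f) C)"
   and f2: "\<And>C. C \<in> Obj \<Longrightarrow> cmp (tensm f (ident C)) (\<sigma> C (dm f)) = cmp (\<sigma> C (cd f)) (tensm (ident C) f)"
    using f S_iff by auto
  have g1: "\<And>C. C \<in> Obj \<Longrightarrow> cmp (\<sigma> (cd g) C) (tensm g (ident C)) = cmp (tensm (ident C) g) (\<sigma> (dm g) C)"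
   and g2: "\<And>C. C \<in> Obj \<Longrightarrow> cmp (tensm g (ident C)) (\<sigma> C (dm g)) = cmp (\<sigma> C (cd g)) (tensm (ident C) g)"
    using g S_iff by auto
  have O: "dm f \<in> Obj" "cd f \<in> Obj" "dm g \<in> Obj" "cd g \<in> Obj" using fA gA ty by auto
  show ?thesis unfolding S_iff
  proof (intro conjI ballI)
    show "tensm f g \<in> Arr" using fA gA ty by auto
    fix C assume C: "C \<in> Obj"
    have sa: "cmp (tensm (ident (cd f)) (\<sigma> (cd g) C)) (tensm f (tensm g (ident C)))
       = cmp (tensm f (tensm (ident C) g)) (tensm (ident (dm f)) (\<sigma> (dm g) C))"
    proof -
      have "cmp (tensm (ident (cd f)) (\<sigma> (cd g) C)) (tensm f (tensm g (ident C)))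
          = tensm (cmp (ident (cd f)) f) (cmp (\<sigma> (cd g) C) (tensm g (ident C)))"
        using fA gA O C by (simp add: ty tensm_comp)
      also have "\<dots> = tensm (cmp f (ident (dm f))) (cmp (tensm (ident C) g) (\<sigma> (dm g) C))"
        using fA g1[OF C] by (simp add: lid rid)
      also have "\<dots> = cmp (tensm f (tensm (ident C) g)) (tensm (ident (dm f)) (\<sigma> (dm g) C))"
        using fA gA O C by (simp add: ty tensm_comp)
      finally show ?thesis .
    qed
    have sb: "cmp (tensm (\<sigma> (cd f) C) (ident (cd g))) (tensm (tensm f (ident C)) g)
       = cmp (tensm (tensm (ident C) f) g) (tensm (\<sigma> (dm f) C) (ident (dm g)))"
    proof -
      have "cmp (tensm (\<sigma> (cd f) C) (ident (cd g))) (tensm (tensm f (ident C)) g)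
          = tensm (cmp (\<sigma> (cd f) C) (tensm f (ident C))) (cmp (ident (cd g)) g)"
        using fA gA O C by (simp add: ty tensm_comp)
      also have "\<dots> = tensm (cmp (tensm (ident C) f) (\<sigma> (dm f) C)) (cmp g (ident (dm g)))"
        using gA f1[OF C] by (simp add: lid rid)
      also have "\<dots> = cmp (tensm (tensm (ident C) f) g) (tensm (\<sigma> (dm f) C) (ident (dm g)))"
        using fA gA O C by (simp add: ty tensm_comp)
      finally show ?thesis .
    qed
    have "cmp (\<sigma> (cd (tensm f g)) C) (tensm (tensm f g) (ident C))
        = cmp (tensm (\<sigma> (cd f) C) (ident (cd g))) (cmp (tensm (ident (cd f)) (\<sigma> (cd g) C)) (tensm f (tensm g (ident C))))"
      using fA gA O C by (simp add: ty hexagon1 assoc_r tens_assoc tensm_assoc)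
    also have "\<dots> = cmp (tensm (\<sigma> (cd f) C) (ident (cd g))) (cmp (tensm f (tensm (ident C) g)) (tensm (ident (dm f)) (\<sigma> (dm g) C)))"
      unfolding sa ..
    also have "\<dots> = cmp (cmp (tensm (\<sigma> (cd f) C) (ident (cd g))) (tensm (tensm f (ident C)) g)) (tensm (ident (dm f)) (\<sigma> (dm g) C))"
      using fA gA O C by (simp add: ty assoc_r tens_assoc tensm_assoc)
    also have "\<dots> = cmp (cmp (tensm (tensm (ident C) f) g) (tensm (\<sigma> (dm f) C) (ident (dm g)))) (tensm (ident (dm f)) (\<sigma> (dm g) C))"
      unfolding sb ..
    also have "\<dots> = cmp (tensm (ident C) (tensm f g)) (\<sigma> (dm (tensm f g)) C)"
      using fA gA O C by (simp add: ty hexagon1 assoc_r tens_assoc tensm_assoc)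
    finally show "cmp (\<sigma> (cd (tensm f g)) C) (tensm (tensm f g) (ident C)) = cmp (tensm (ident C) (tensm f g)) (\<sigma> (dm (tensm f g)) C)" .
    have sc: "cmp (tensm f (tensm g (ident C))) (tensm (ident (dm f)) (\<sigma> C (dm g)))
       = cmp (tensm (ident (cd f)) (\<sigma> C (cd g))) (tensm f (tensm (ident C) g))"
    proof -
      have "cmp (tensm f (tensm g (ident C))) (tensm (ident (dm f)) (\<sigma> C (dm g)))
          = tensm (cmp f (ident (dm f))) (cmp (tensm g (ident C)) (\<sigma> C (dm g)))"
        using fA gA O C by (simp add: ty tensm_comp)
      also have "\<dots> = tensm (cmp (ident (cd f)) f) (cmp (\<sigma> C (cd g)) (tensm (ident C) g))"
        using fA g2[OF C] by (simp add: lid rid)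
      also have "\<dots> = cmp (tensm (ident (cd f)) (\<sigma> C (cd g))) (tensm f (tensm (ident C) g))"
        using fA gA O C by (simp add: ty tensm_comp)
      finally show ?thesis .
    qed
    have sd: "cmp (tensm (tensm f (ident C)) g) (tensm (\<sigma> C (dm f)) (ident (dm g)))
       = cmp (tensm (\<sigma> C (cd f)) (ident (cd g))) (tensm (tensm (ident C) f) g)"
    proof -
      have "cmp (tensm (tensm f (ident C)) g) (tensm (\<sigma> C (dm f)) (ident (dm g)))
          = tensm (cmp (tensm f (ident C)) (\<sigma> C (dm f))) (cmp g (ident (dm g)))"
        using fA gA O C by (simp add: ty tensm_comp)
      also have "\<dots> = tensm (cmp (\<sigma> C (cd f)) (tensm (ident C) f)) (cmp (ident (cd g)) g)"
        using gA f2[OF C] by (simp add: lid rid)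
      also have "\<dots> = cmp (tensm (\<sigma> C (cd f)) (ident (cd g))) (tensm (tensm (ident C) f) g)"
        using fA gA O C by (simp add: ty tensm_comp)
      finally show ?thesis .
    qed
    have "cmp (tensm (tensm f g) (ident C)) (\<sigma> C (dm (tensm f g)))
        = cmp (cmp (tensm f (tensm g (ident C))) (tensm (ident (dm f)) (\<sigma> C (dm g)))) (tensm (\<sigma> C (dm f)) (ident (dm g)))"
      using fA gA O C by (simp add: ty hexagon2 assoc_r tens_assoc tensm_assoc)
    also have "\<dots> = cmp (cmp (tensm (ident (cd f)) (\<sigma> C (cd g))) (tensm f (tensm (ident C) g))) (tensm (\<sigma> C (dm f)) (ident (dm g)))"
      unfolding sc ..
    also have "\<dots> = cmp (tensm (ident (cd f)) (\<sigma> C (cd g))) (cmp (tensm (tensm f (ident C)) g) (tensm (\<sigma> C (dm f)) (ident (dm g))))"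
      using fA gA O C by (simp add: ty assoc_r tens_assoc tensm_assoc)
    also have "\<dots> = cmp (tensm (ident (cd f)) (\<sigma> C (cd g))) (cmp (tensm (\<sigma> C (cd f)) (ident (cd g))) (tensm (tensm (ident C) f) g))"
      unfolding sd ..
    also have "\<dots> = cmp (\<sigma> C (cd (tensm f g))) (tensm (ident C) (tensm f g))"
      using fA gA O C by (simp add: ty hexagon2 assoc_r tens_assoc tensm_assoc)
    finally show "cmp (tensm (tensm f g) (ident C)) (\<sigma> C (dm (tensm f g))) = cmp (\<sigma> C (cd (tensm f g))) (tensm (ident C) (tensm f g))" .
  qed
qed

end


theorem proposition5p9:
  fixes Obj :: "'o set" and Arr :: "'m set"
    and dm :: "'m \<Rightarrow> 'o" and cd :: "'m \<Rightarrow> 'o"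
    and cmp :: "'m \<Rightarrow> 'm \<Rightarrow> 'm" and ident :: "'o \<Rightarrow> 'm"
    and tens :: "'o \<Rightarrow> 'o \<Rightarrow> 'o" and tensm :: "'m \<Rightarrow> 'm \<Rightarrow> 'm" and unit :: 'o
    and \<sigma> :: "'o \<Rightarrow> 'o \<Rightarrow> 'm"
  assumes "pre_braiding Obj Arr dm cd cmp ident tens tensm unit \<sigma>"
  shows "braided_monoidal_category Obj (C_sigma_Arr Obj Arr dm cd cmp ident tensm \<sigma>)
           dm cd cmp ident tens tensm unit \<sigma>"
proof -
  interpret P: pre_braiding Obj Arr dm cd cmp ident tens tensm unit \<sigma> by fact
  have sub: "\<And>f. f \<in> P.S \<Longrightarrow> f \<in> Arr" using P.S_iff by blast
  show ?thesis
    unfolding P.S_def[symmetric]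
    apply unfold_locales
    using sub P.ident_S P.comp_S P.tensm_S P.sigma_S P.natural_S
      P.dom_in P.cod_in P.ident_dom P.ident_cod P.comp_dom P.comp_cod
      P.comp_ident_left P.comp_ident_right P.comp_assoc P.unit_in P.tens_obj
      P.tensm_dom P.tensm_cod P.tensm_ident P.tensm_comp P.tens_assoc
      P.tens_unit_left P.tens_unit_right P.tensm_assoc P.tensm_unit_left P.tensm_unit_right
      P.sigma_dom P.sigma_cod P.yang_baxter P.hexagon1 P.hexagon2
    by auto
qed

end
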